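(* Let $M=\mathbb{R}/\mathbb{Z}$, $\pi_M:\mathbb{R}\to M$ the canonical projection, $I_0=\pi_M([\tfrac14,\tfrac34])$, and let $f_0:M\to M$ be a $\mathscr{C}^r$ diffeomorphism ($r\ge1$) with $f_0(x)=\tfrac12x+\tfrac14\bmod1$ for $x\in I_0$. Let $(\Omega,\mathcal{F},\mathbb{P})$ be a probability space, $\kappa:\Omega\to\mathbb{R}$ a measurable function with values in $[-1,1]$ $\mathbb{P}$-almost surely, $0<\epsilon<\tfrac18$, and $f_\omega(x)=f_0(x)+\epsilon\kappa(\omega)\bmod 1$. Let $\theta:\Omega\to\Omega$ be measurably invertible and nonsingular with respect to $\mathbb{P}$, and let $f^{(n)}_\omega=f_{\theta^{n-1}\omega}\circ\cdots\circ f_\omega$ ($f^{(0)}_\omega=\mathrm{id}_M$). Suppose that $\theta$ is non-historic. Then for $\mathbb{P}$-almost every $\omega$, the set of points of $I_0$ with historic behaviour at $\omega$ is empty (in particular, of zero Lebesgue measure).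
   Context: $\theta$ is nonsingular with respect to $\mathbb{P}$ if $\mathbb{P}(\theta^{-1}\Gamma)=1$ whenever $\Gamma$ is measurable with $\mathbb{P}(\Gamma)=1$. $\theta$ is historic if there is a measurable set $\Gamma$ with $\mathbb{P}(\Gamma)>0$ such that for each $\omega\in\Gamma$ there is an integrable function $b:\Omega\to\mathbb{R}$ for which $\lim_{n\to\infty}\frac1n\sum_{j=0}^{n-1}b(\theta^j\omega)$ does not exist; otherwise $\theta$ is non-historic. A point $x\in M$ has historic behaviour at $\omega$ if there is a continuous $\varphi:M\to\mathbb{R}$ such that $\lim_{n\to\infty}\frac1n\sum_{j=0}^{n-1}\varphi(f^{(j)}_\omega(x))$ does not exist. *)

theory Defs
  imports "HOL-Probability.Probability"
begin

text \<open>The circle M = R/Z is represented by the fundamental domain [0,1) of real numbers;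
  reduction mod 1 is frac. A continuous function on M is a continuous 1-periodic
  function on R.\<close>

definition circle_pt :: "real \<Rightarrow> bool" where
  "circle_pt x \<longleftrightarrow> 0 \<le> x \<and> x < 1"

definition Cr_fun :: "nat \<Rightarrow> (real \<Rightarrow> real) \<Rightarrow> bool" where
  "Cr_fun r F \<longleftrightarrow> (\<forall>k<r. \<forall>x. ((deriv ^^ k) F) differentiable (at x))
      \<and> continuous_on UNIV ((deriv ^^ r) F)"

text \<open>A C^r diffeomorphism of the circle, given on representatives in [0,1):
  it has a C^r lift F : R -> R of degree +1 or -1 with nowhere-vanishing derivative.\<close>
definition circle_Cr_diffeo :: "nat \<Rightarrow> (real \<Rightarrow> real) \<Rightarrow> bool" where
  "circle_Cr_diffeo r f \<longleftrightarrow> (\<exists>F d. Cr_fun r F \<and> (d = 1 \<or> d = -1)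
      \<and> (\<forall>x. F (x + 1) = F x + d) \<and> (\<forall>x. deriv F x \<noteq> 0)
      \<and> (\<forall>x. circle_pt x \<longrightarrow> f x = frac (F x)))"

definition circle_continuous :: "(real \<Rightarrow> real) \<Rightarrow> bool" where
  "circle_continuous \<phi> \<longleftrightarrow> continuous_on UNIV \<phi> \<and> (\<forall>x. \<phi> (x + 1) = \<phi> x)"

fun rcomp :: "('w \<Rightarrow> 'x \<Rightarrow> 'x) \<Rightarrow> ('w \<Rightarrow> 'w) \<Rightarrow> nat \<Rightarrow> 'w \<Rightarrow> 'x \<Rightarrow> 'x" where
  "rcomp f \<theta> 0 \<omega> = id"
| "rcomp f \<theta> (Suc n) \<omega> = f ((\<theta> ^^ n) \<omega>) \<circ> rcomp f \<theta> n \<omega>"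

definition measurably_invertible :: "'w measure \<Rightarrow> ('w \<Rightarrow> 'w) \<Rightarrow> bool" where
  "measurably_invertible P \<theta> \<longleftrightarrow> \<theta> \<in> P \<rightarrow>\<^sub>M P \<and> bij_betw \<theta> (space P) (space P)
     \<and> (\<exists>\<psi> \<in> P \<rightarrow>\<^sub>M P. \<forall>\<omega>\<in>space P. \<psi> (\<theta> \<omega>) = \<omega> \<and> \<theta> (\<psi> \<omega>) = \<omega>)"

definition nonsingular :: "'w measure \<Rightarrow> ('w \<Rightarrow> 'w) \<Rightarrow> bool" where
  "nonsingular P \<theta> \<longleftrightarrow> (\<forall>\<Gamma>\<in>sets P. measure P \<Gamma> = 1 \<longrightarrow> measure P (\<theta> -` \<Gamma> \<inter> space P) = 1)"

definition historic :: "'w measure \<Rightarrow> ('w \<Rightarrow> 'w) \<Rightarrow> bool" where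
  "historic P \<theta> \<longleftrightarrow> (\<exists>\<Gamma>\<in>sets P. measure P \<Gamma> > 0 \<and>
     (\<forall>\<omega>\<in>\<Gamma>. \<exists>b :: 'w \<Rightarrow> real. integrable P b \<and>
        \<not> convergent (\<lambda>n. (1 / real n) * (\<Sum>j<n. b ((\<theta> ^^ j) \<omega>)))))"

definition historic_behaviour_at ::
    "('w \<Rightarrow> real \<Rightarrow> real) \<Rightarrow> ('w \<Rightarrow> 'w) \<Rightarrow> 'w \<Rightarrow> real \<Rightarrow> bool" where
  "historic_behaviour_at f \<theta> \<omega> x \<longleftrightarrow> (\<exists>\<phi>. circle_continuous \<phi> \<and>
     \<not> convergent (\<lambda>n. (1 / real n) * (\<Sum>j<n. \<phi> (rcomp f \<theta> j \<omega> x))))"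

end

theory Submission
  imports Defs "HOL-Analysis.Analysis"
begin


lemma cesaro_null:
  fixes d :: "nat \<Rightarrow> real"
  assumes "d \<longlonglongrightarrow> 0"
  shows "(\<lambda>n. 1 / real n * (\<Sum>j<n. d j)) \<longlonglongrightarrow> 0"
proof (rule LIMSEQ_I)
  fix e :: real assume e: "0 < e"
  obtain N where N: "\<And>j. j \<ge> N \<Longrightarrow> \<bar>d j\<bar> < e/2"
    using LIMSEQ_D[OF assms, of "e/2"] e by auto
  define C where "C = (\<Sum>j<N. \<bar>d j\<bar>)"
  have C0: "C \<ge> 0" unfolding C_def by (auto intro: sum_nonneg)
  obtain M where M: "real M > 2 * C / e" using reals_Archimedean2 by blast
  show "\<exists>no. \<forall>n\<ge>no. norm (1 / real n * (\<Sum>j<n. d j) - 0) < e"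
  proof (intro exI allI impI)
    fix n assume n: "n \<ge> max (Suc M) N"
    then have npos: "real n > 0" by auto
    have split: "{..<n} = {..<N} \<union> {N..<n}" using n by auto
    have "\<bar>\<Sum>j<n. d j\<bar> \<le> (\<Sum>j<n. \<bar>d j\<bar>)" by (rule sum_abs)
    also have "\<dots> = C + (\<Sum>j\<in>{N..<n}. \<bar>d j\<bar>)"
      unfolding C_def split by (subst sum.union_disjoint) auto
    also have "(\<Sum>j\<in>{N..<n}. \<bar>d j\<bar>) \<le> (\<Sum>j\<in>{N..<n}. e/2)"
      by (intro sum_mono) (meson N atLeastLessThan_iff less_imp_le)
    also have "\<dots> \<le> real n * (e/2)" using e by auto
    finally have s: "\<bar>\<Sum>j<n. d j\<bar> \<le> C + real n * (e/2)" by simp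
    have "C < real n * (e/2)"
    proof -
      have "real n > real M" using n by auto
      hence "real n > 2 * C / e" using M by linarith
      thus ?thesis using e by (simp add: field_simps)
    qed
    hence "\<bar>\<Sum>j<n. d j\<bar> < real n * e" using s by linarith
    thus "norm (1 / real n * (\<Sum>j<n. d j) - 0) < e"
      using npos by (simp add: abs_mult field_simps)
  qed
qed

lemma convergent_iff_nat_cauchy:
  fixes X :: "nat \<Rightarrow> real"
  shows "convergent X \<longleftrightarrow> (\<forall>m::nat. \<exists>N. \<forall>n\<ge>N. \<forall>n'\<ge>N. \<bar>X n - X n'\<bar> < 1 / real (Suc m))"
proof
  assume "convergent X"
  hence c: "Cauchy X" by (simp add: Cauchy_convergent_iff)
  show "\<forall>m::nat. \<exists>N. \<forall>n\<ge>N. \<forall>n'\<ge>N. \<bar>X n - X n'\<bar> < 1 / real (Suc m)"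
  proof
    fix m :: nat
    have "(0::real) < 1 / real (Suc m)" by simp
    from metric_CauchyD[OF c this] obtain N where "\<forall>n\<ge>N. \<forall>n'\<ge>N. dist (X n) (X n') < 1 / real (Suc m)" by auto
    thus "\<exists>N. \<forall>n\<ge>N. \<forall>n'\<ge>N. \<bar>X n - X n'\<bar> < 1 / real (Suc m)" by (auto simp: dist_real_def)
  qed
next
  assume a: "\<forall>m::nat. \<exists>N. \<forall>n\<ge>N. \<forall>n'\<ge>N. \<bar>X n - X n'\<bar> < 1 / real (Suc m)"
  have "Cauchy X"
  proof (rule metric_CauchyI)
    fix e :: real assume e: "0 < e"
    obtain m :: nat where m: "1 / real (Suc m) < e"
      using e by (metis nat_approx_posE)
    from a obtain N where "\<forall>n\<ge>N. \<forall>n'\<ge>N. \<bar>X n - X n'\<bar> < 1 / real (Suc m)" by blast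
    thus "\<exists>M. \<forall>m\<ge>M. \<forall>n\<ge>M. dist (X m) (X n) < e" using m
      by (auto simp: dist_real_def intro!: exI[of _ N]) (meson less_trans)
  qed
  thus "convergent X" by (simp add: Cauchy_convergent_iff)
qed

lemma funpow_measurable: "\<theta> \<in> M \<rightarrow>\<^sub>M M \<Longrightarrow> (\<theta> ^^ n) \<in> M \<rightarrow>\<^sub>M M"
  by (induction n) (auto simp: funpow_Suc_right intro: measurable_comp)


lemma poly_avg_convergent:
  fixes y :: "nat \<Rightarrow> real"
  assumes "\<forall>k. convergent (\<lambda>n. 1 / real n * (\<Sum>j<n. (y j)^k))"
  shows "convergent (\<lambda>n. 1 / real n * (\<Sum>j<n. (\<Sum>i\<le>d. a i * (y j)^i)))"
proof -
  have eq: "1 / real n * (\<Sum>j<n. (\<Sum>i\<le>d. a i * (y j)^i)) =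
            (\<Sum>i\<le>d. a i * (1 / real n * (\<Sum>j<n. (y j)^i)))" for n
    by (simp add: sum_distrib_left sum.swap[of _ "{..<n}"] mult_ac)
  show ?thesis unfolding eq
    by (rule convergent_sum, rule convergent_mult[OF convergent_const]) (use assms in blast)
qed

lemma core:
  fixes z y :: "nat \<Rightarrow> real" and \<phi> :: "real \<Rightarrow> real"
  assumes phi: "continuous_on UNIV \<phi>" and yI: "\<forall>j. y j \<in> {1/4..3/4}" and zI: "\<forall>j. z j \<in> {1/4..3/4}"
  and zy: "(\<lambda>j. z j - y j) \<longlonglongrightarrow> 0"
  and pw: "\<forall>k. convergent (\<lambda>n. 1 / real n * (\<Sum>j<n. (y j)^k))"
  shows "convergent (\<lambda>n. 1 / real n * (\<Sum>j<n. \<phi> (z j)))"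
proof -
  let ?S = "{1/4..3/4::real}"
  have cS: "continuous_on ?S \<phi>" using phi continuous_on_subset by blast
  define A where "A n = 1 / real n * (\<Sum>j<n. \<phi> (y j))" for n
  have "Cauchy A"
  proof (rule metric_CauchyI)
    fix e :: real assume e: "0 < e"
    obtain g where g: "polynomial_function g" "\<forall>x\<in>?S. norm (\<phi> x - g x) < e/3"
      using Stone_Weierstrass_polynomial_function[OF compact_Icc cS, of "e/3"] e by auto
    obtain a d where gs: "g = (\<lambda>x. \<Sum>i\<le>d. a i * x^i)"
      using real_polynomial_function_imp_sum g(1) real_polynomial_function_eq by blast
    define B where "B n = 1 / real n * (\<Sum>j<n. g (y j))" for n
    have "convergent B" unfolding B_def gs using poly_avg_convergent[OF pw] .
    hence "Cauchy B" by (simp add: Cauchy_convergent_iff)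
    from metric_CauchyD[OF this, of "e/3"] e obtain M where
      M: "\<forall>m\<ge>M. \<forall>n\<ge>M. dist (B m) (B n) < e/3" by auto
    have AB: "\<bar>A n - B n\<bar> \<le> e/3" for n
    proof (cases "n = 0")
      case True thus ?thesis using e by (simp add: A_def B_def)
    next
      case False
      have "A n - B n = (\<Sum>j<n. \<phi> (y j) - g (y j)) / real n"
        by (simp add: A_def B_def sum_subtractf diff_divide_distrib)
      hence "\<bar>A n - B n\<bar> = 1 / real n * \<bar>\<Sum>j<n. \<phi> (y j) - g (y j)\<bar>"
        by (simp add: abs_divide)
      also have "\<bar>\<Sum>j<n. \<phi> (y j) - g (y j)\<bar> \<le> (\<Sum>j<n. e/3)"
        by (rule order_trans[OF sum_abs], rule sum_mono) (use g(2) yI in \<open>auto intro: less_imp_le\<close>)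
      finally show ?thesis using False by (simp add: field_simps)
    qed
    show "\<exists>M. \<forall>m\<ge>M. \<forall>n\<ge>M. dist (A m) (A n) < e"
    proof (intro exI allI impI)
      fix m n assume "m \<ge> M" "n \<ge> M"
      hence "\<bar>B m - B n\<bar> < e/3" using M by (auto simp: dist_real_def)
      with AB[of m] AB[of n] show "dist (A m) (A n) < e" unfolding dist_real_def by linarith
    qed
  qed
  hence cA: "convergent A" by (simp add: Cauchy_convergent_iff)
  have d0: "(\<lambda>j. \<phi> (z j) - \<phi> (y j)) \<longlonglongrightarrow> 0"
  proof (rule LIMSEQ_I)
    fix e :: real assume e: "0 < e"
    have "uniformly_continuous_on ?S \<phi>" by (rule compact_uniformly_continuous[OF cS compact_Icc])
    then obtain dd where dd: "dd > 0" "\<forall>x\<in>?S. \<forall>x'\<in>?S. dist x' x < dd \<longrightarrow> dist (\<phi> x') (\<phi> x) < e"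
      using e unfolding uniformly_continuous_on_def by blast
    obtain N where N: "\<forall>j\<ge>N. norm (z j - y j - 0) < dd" using LIMSEQ_D[OF zy dd(1)] by blast
    show "\<exists>N. \<forall>j\<ge>N. norm (\<phi> (z j) - \<phi> (y j) - 0) < e"
    proof (intro exI allI impI)
      fix j assume "j \<ge> N"
      hence "dist (z j) (y j) < dd" using N by (simp add: dist_real_def)
      hence "dist (\<phi> (z j)) (\<phi> (y j)) < e" using dd(2) yI zI by blast
      thus "norm (\<phi> (z j) - \<phi> (y j) - 0) < e" by (simp add: dist_real_def)
    qed
  qed
  have "convergent (\<lambda>n. A n + 1 / real n * (\<Sum>j<n. \<phi> (z j) - \<phi> (y j)))"
    using cA cesaro_null[OF d0] by (intro convergent_add) (auto simp: convergent_def)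
  moreover have "A n + 1 / real n * (\<Sum>j<n. \<phi> (z j) - \<phi> (y j)) = 1 / real n * (\<Sum>j<n. \<phi> (z j))" for n
    by (simp add: A_def sum_subtractf diff_divide_distrib)
  ultimately show ?thesis by simp
qed


theorem proposition1p3:
  fixes P :: "'w measure" and f0 :: "real \<Rightarrow> real" and \<kappa> :: "'w \<Rightarrow> real"
    and \<theta> :: "'w \<Rightarrow> 'w" and \<epsilon> :: real and r :: nat
  assumes "prob_space P"
    and "r \<ge> 1"
    and "circle_Cr_diffeo r f0"
    and "\<forall>x\<in>{1/4..3/4}. f0 x = x / 2 + 1 / 4"
    and "\<kappa> \<in> borel_measurable P"
    and "AE \<omega> in P. -1 \<le> \<kappa> \<omega> \<and> \<kappa> \<omega> \<le> 1"
    and "0 < \<epsilon>" and "\<epsilon> < 1/8"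
    and "measurably_invertible P \<theta>"
    and "nonsingular P \<theta>"
    and "\<not> historic P \<theta>"
  shows "AE \<omega> in P. {x \<in> {1/4..3/4}.
            historic_behaviour_at (\<lambda>\<omega>' y. frac (f0 y + \<epsilon> * \<kappa> \<omega>')) \<theta> \<omega> x} = {}"
proof -
  interpret prob_space P by fact
  note f0I = assms(4) and kmeas[measurable] = assms(5) and kAE = assms(6)
  note e0 = assms(7) and e1 = assms(8)
  from assms(9) obtain \<psi> where thM[measurable]: "\<theta> \<in> P \<rightarrow>\<^sub>M P" and psim[measurable]: "\<psi> \<in> P \<rightarrow>\<^sub>M P"
    and inv: "\<And>\<omega>. \<omega> \<in> space P \<Longrightarrow> \<psi> (\<theta> \<omega>) = \<omega> \<and> \<theta> (\<psi> \<omega>) = \<omega>"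
    unfolding measurably_invertible_def by blast
  have thsp: "\<omega> \<in> space P \<Longrightarrow> \<theta> \<omega> \<in> space P" for \<omega> using measurable_space[OF thM] by blast
  have thnsp: "\<omega> \<in> space P \<Longrightarrow> (\<theta> ^^ n) \<omega> \<in> space P" for \<omega> n
    by (induction n) (auto simp: thsp)
  have psin: "(\<psi> ^^ n) \<in> P \<rightarrow>\<^sub>M P" for n by (rule funpow_measurable[OF psim])
  have thn: "(\<theta> ^^ n) \<in> P \<rightarrow>\<^sub>M P" for n by (rule funpow_measurable[OF thM])
  define k' where "k' \<omega> = max (-1) (min 1 (\<kappa> \<omega>))" for \<omega>
  have k'm[measurable]: "k' \<in> borel_measurable P" unfolding k'_def by measurable
  have k'b: "\<bar>k' \<omega>\<bar> \<le> 1" for \<omega> unfolding k'_def by auto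
  define S where "S \<omega> = (\<Sum>m. (1/2::real)^m * k' ((\<psi> ^^ Suc m) \<omega>))" for \<omega>
  define h where "h \<omega> = 1/2 + \<epsilon> * S \<omega>" for \<omega>
  have summ: "summable (\<lambda>m. (1/2::real)^m * k' (g m))" for g :: "nat \<Rightarrow> 'w"
  proof (rule summable_comparison_test[OF _ summable_geometric[of "1/2::real"]])
    show "\<exists>N. \<forall>n\<ge>N. norm ((1/2::real)^n * k' (g n)) \<le> (1/2)^n"
      using k'b by (auto simp: abs_mult intro!: mult_left_le)
  qed simp
  have Sb: "\<bar>S \<omega>\<bar> \<le> 2" for \<omega>
  proof -
    have s2: "(\<Sum>m. (1/2::real)^m) = 2" using suminf_geometric[of "1/2::real"] by simp
    have nb: "norm ((1/2::real)^m * k' ((\<psi> ^^ Suc m) \<omega>)) \<le> (1/2)^m" for m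
    proof -
      have "norm ((1/2::real)^m * k' ((\<psi> ^^ Suc m) \<omega>)) = (1/2)^m * \<bar>k' ((\<psi> ^^ Suc m) \<omega>)\<bar>"
        by (simp add: abs_mult)
      also have "\<dots> \<le> (1/2)^m * 1" by (rule mult_left_mono[OF k'b]) simp
      finally show ?thesis by simp
    qed
    have "norm (S \<omega>) \<le> (\<Sum>m. (1/2::real)^m)" unfolding S_def
      by (rule norm_suminf_le[OF nb summable_geometric]) simp
    thus ?thesis using s2 by simp
  qed
  have hI: "h \<omega> \<in> {1/4..3/4}" for \<omega>
  proof -
    have "\<bar>\<epsilon> * S \<omega>\<bar> \<le> \<epsilon> * 2" using Sb[of \<omega>] e0 by (simp add: abs_mult mult_left_mono)
    thus ?thesis using e1 unfolding h_def by (auto simp: abs_le_iff)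
  qed
  have hrec: "h (\<theta> \<omega>) = h \<omega> / 2 + 1/4 + \<epsilon> * k' \<omega>" if \<omega>: "\<omega> \<in> space P" for \<omega>
  proof -
    define g where "g m = (1/2::real)^m * k' ((\<psi> ^^ m) \<omega>)" for m
    have g1: "(1/2::real)^m * k' ((\<psi> ^^ Suc m) (\<theta> \<omega>)) = g m" for m
      unfolding g_def by (simp only: funpow_Suc_right o_apply inv[OF \<omega>])
    have sg: "summable g" unfolding g_def by (rule summ)
    have "S (\<theta> \<omega>) = suminf g" unfolding S_def g1 ..
    also have "\<dots> = g 0 + (\<Sum>m. g (Suc m))" using suminf_split_head[OF sg] by simp
    also have "(\<Sum>m. g (Suc m)) = (\<Sum>m. (1/2) * ((1/2::real)^m * k' ((\<psi> ^^ Suc m) \<omega>)))"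
      unfolding g_def by (simp add: mult_ac)
    also have "\<dots> = (1/2) * S \<omega>" unfolding S_def by (rule suminf_mult[OF summ])
    finally have "S (\<theta> \<omega>) = k' \<omega> + S \<omega> / 2" by (simp add: g_def)
    thus ?thesis unfolding h_def by (simp add: field_simps)
  qed
  have fm: "(\<lambda>\<omega>. (1/2::real)^m * k' ((\<psi> ^^ Suc m) \<omega>)) \<in> borel_measurable P" for m
    by (intro borel_measurable_times borel_measurable_const measurable_comp[OF psin k'm, unfolded comp_def])
  have hm[measurable]: "h \<in> borel_measurable P" unfolding h_def S_def
    by (intro borel_measurable_add borel_measurable_times borel_measurable_const borel_measurable_suminf fm)
  define Y where "Y j \<omega> = h ((\<theta> ^^ j) \<omega>)" for j \<omega>
  have Ym[measurable]: "Y j \<in> borel_measurable P" for j unfolding Y_def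
    by (rule measurable_comp[OF thn hm, unfolded comp_def])
  define A where "A i = {\<omega>\<in>space P. -1 \<le> \<kappa> ((\<theta> ^^ i) \<omega>) \<and> \<kappa> ((\<theta> ^^ i) \<omega>) \<le> 1}" for i
  have km: "(\<lambda>\<omega>. \<kappa> ((\<theta> ^^ i) \<omega>)) \<in> borel_measurable P" for i
    by (rule measurable_comp[OF thn kmeas, unfolded comp_def])
  have Asets: "A i \<in> sets P" for i
  proof -
    have [measurable]: "(\<lambda>\<omega>. \<kappa> ((\<theta> ^^ i) \<omega>)) \<in> borel_measurable P" by (rule km)
    show ?thesis unfolding A_def by measurable
  qed
  have Aprob: "prob (A i) = 1" for i
  proof (induction i)
    case 0
    have "AE \<omega> in P. \<omega> \<in> A 0" using kAE AE_space by eventually_elim (auto simp: A_def)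
    thus ?case using AE_in_set_eq_1 Asets by blast
  next
    case (Suc i)
    have "A (Suc i) = \<theta> -` A i \<inter> space P"
      unfolding A_def by (auto simp: funpow_swap1 thsp)
    moreover have "measure P (\<theta> -` A i \<inter> space P) = 1"
      using assms(10) Suc.IH Asets[of i] unfolding nonsingular_def by blast
    ultimately show ?case by simp
  qed
  have AEA: "AE \<omega> in P. \<forall>i. \<omega> \<in> A i"
    unfolding AE_all_countable using Aprob AE_prob_1 by blast
  define C where "C k = {\<omega>\<in>space P. convergent (\<lambda>n. 1 / real n * (\<Sum>j<n. (Y j \<omega>)^k))}" for k
  have Csets: "C k \<in> sets P" for k
  proof -
    define G where "G n \<omega> = 1 / real n * (\<Sum>j<n. (Y j \<omega>)^k)" for n \<omega>
    have [measurable]: "G n \<in> borel_measurable P" for n unfolding G_def by measurable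
    have "C k = {\<omega>\<in>space P. \<forall>m::nat. \<exists>N::nat. \<forall>n\<ge>N. \<forall>n'\<ge>N. \<bar>G n \<omega> - G n' \<omega>\<bar> < 1 / real (Suc m)}"
      unfolding C_def G_def convergent_iff_nat_cauchy ..
    also have "\<dots> \<in> sets P" by measurable
    finally show ?thesis .
  qed
  have Cprob: "prob (C k) = 1" for k
  proof (rule ccontr)
    assume "prob (C k) \<noteq> 1"
    hence "prob (C k) < 1" using prob_le_1 by (simp add: less_le)
    hence pos: "prob (space P - C k) > 0" using prob_compl[OF Csets[of k]] by simp
    have "historic P \<theta>" unfolding historic_def
    proof (intro bexI[of _ "space P - C k"] conjI ballI)
      show "space P - C k \<in> sets P" using Csets by auto
      show "prob (space P - C k) > 0" by (rule pos)
      fix \<omega> assume "\<omega> \<in> space P - C k"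
      hence nc: "\<not> convergent (\<lambda>n. 1 / real n * (\<Sum>j<n. (Y j \<omega>)^k))" unfolding C_def by auto
      show "\<exists>b :: 'w \<Rightarrow> real. integrable P b \<and>
        \<not> convergent (\<lambda>n. (1 / real n) * (\<Sum>j<n. b ((\<theta> ^^ j) \<omega>)))"
      proof (intro exI conjI)
        show "integrable P (\<lambda>\<omega>. (h \<omega>)^k)"
        proof (rule integrable_const_bound[where B=1])
          show "AE x in P. norm ((h x)^k) \<le> 1"
          proof (rule AE_I2)
            fix x
            have "\<bar>h x\<bar> \<le> 1" using hI[of x] by auto
            hence "\<bar>h x\<bar>^k \<le> 1" by (intro power_le_one) auto
            thus "norm ((h x)^k) \<le> 1" by (simp add: power_abs)
          qed
        qed measurable
        show "\<not> convergent (\<lambda>n. (1 / real n) * (\<Sum>j<n. (h ((\<theta> ^^ j) \<omega>))^k))"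
          using nc by (simp add: Y_def)
      qed
    qed
    with assms(11) show False by contradiction
  qed
  have AEC: "AE \<omega> in P. \<forall>k. \<omega> \<in> C k"
    unfolding AE_all_countable using Cprob AE_prob_1 by blast
  show ?thesis
    using AEA AEC AE_space
  proof eventually_elim
    case (elim \<omega>)
    hence \<omega>: "\<omega> \<in> space P" and Ai: "\<And>i. \<omega> \<in> A i" and Ck: "\<And>k. \<omega> \<in> C k" by auto
    let ?F = "\<lambda>\<omega>' y. frac (f0 y + \<epsilon> * \<kappa> \<omega>')"
    show ?case
    proof (rule ccontr)
      assume "\<not> ?thesis"
      then obtain x \<phi> where xI: "x \<in> {1/4..3/4}" and phc: "circle_continuous \<phi>"
        and nc: "\<not> convergent (\<lambda>n. (1 / real n) * (\<Sum>j<n. \<phi> (rcomp ?F \<theta> j \<omega> x)))"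
        unfolding historic_behaviour_at_def by auto
      define z where "z j = rcomp ?F \<theta> j \<omega> x" for j
      have ind: "z j \<in> {1/4..3/4} \<and> \<bar>z j - Y j \<omega>\<bar> \<le> (1/2)^j" for j
      proof (induction j)
        case 0
        show ?case using xI hI[of \<omega>] by (auto simp: z_def Y_def)
      next
        case (Suc j)
        let ?w = "(\<theta> ^^ j) \<omega>"
        have kb: "-1 \<le> \<kappa> ?w" "\<kappa> ?w \<le> 1" using Ai[of j] by (auto simp: A_def)
        hence kk: "k' ?w = \<kappa> ?w" by (simp add: k'_def)
        have eb: "\<bar>\<epsilon> * \<kappa> ?w\<bar> \<le> \<epsilon>" using kb e0 by (simp add: abs_mult mult_left_le)
        define v where "v = z j / 2 + 1/4 + \<epsilon> * \<kappa> ?w"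
        have vI: "v \<in> {1/4..3/4}" using Suc.IH eb e1 unfolding v_def by (auto simp: abs_le_iff)
        have zS: "z (Suc j) = v"
        proof -
          have "z (Suc j) = frac (f0 (z j) + \<epsilon> * \<kappa> ?w)" by (simp add: z_def)
          also have "f0 (z j) = z j / 2 + 1/4" using f0I Suc.IH by blast
          finally show ?thesis using vI frac_eq[of v] by (simp add: v_def)
        qed
        have yS: "Y (Suc j) \<omega> = Y j \<omega> / 2 + 1/4 + \<epsilon> * \<kappa> ?w"
          using hrec[OF thnsp[OF \<omega>, of j]] kk by (simp add: Y_def)
        have "\<bar>z (Suc j) - Y (Suc j) \<omega>\<bar> = \<bar>z j - Y j \<omega>\<bar> / 2"
        proof -
          have "z (Suc j) - Y (Suc j) \<omega> = (z j - Y j \<omega>) / 2" using zS yS by (simp add: v_def)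
          thus ?thesis by (simp only: abs_divide)
        qed
        also have "\<dots> \<le> (1/2)^Suc j" using Suc.IH by simp
        finally show ?case using zS vI by simp
      qed
      have zy: "(\<lambda>j. z j - Y j \<omega>) \<longlonglongrightarrow> 0"
        by (rule Lim_null_comparison[OF _ LIMSEQ_realpow_zero[of "1/2::real"]]) (use ind in auto)
      have "convergent (\<lambda>n. 1 / real n * (\<Sum>j<n. \<phi> (z j)))"
      proof -
        have c1: "continuous_on UNIV \<phi>" using phc by (simp add: circle_continuous_def)
        have c2: "\<forall>j. Y j \<omega> \<in> {1/4..3/4}" using hI by (simp add: Y_def)
        have c3: "\<forall>j. z j \<in> {1/4..3/4}" using ind by blast
        have c5: "\<forall>k. convergent (\<lambda>n. 1 / real n * (\<Sum>j<n. (Y j \<omega>)^k))" using Ck by (simp add: C_def)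
        show ?thesis by (rule core[OF c1 c2 c3 zy c5])
      qed
      with nc show False by (simp add: z_def)
    qed
  qed
qed

end
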